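(* Let $G\in\mathbb{R}^{m\times n}$, $b\in\mathbb{R}^m$, and $\mathcal{P}=\{x\in\mathbb{R}^n : Gx\le b\}$. Let $f_d:\mathbb{R}^n\to\mathbb{R}^n$ be continuously differentiable and consider the discrete system $x_{k+1}=f_d(x_k)$. Then $\mathcal{P}$ is an invariant set for this discrete system if and only if there exists a matrix $H\in\mathbb{R}^{m\times m}$ with all entries nonnegative such that $$HGx-Gf_d(x)\ge Hb-b\quad\text{for all } x\in\mathcal{P},$$ where the inequality between vectors is componentwise.
   Context: A set $\mathcal{S}\subseteq\mathbb{R}^n$ is an invariant set for the discrete system $x_{k+1}=f_d(x_k)$ if $x_k\in\mathcal{S}$ implies $x_{k+1}\in\mathcal{S}$ for all $k\in\mathbb{N}$. *)

theory Defs
  imports "HOL-Analysis.Analysis"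
begin

definition invariant_set_discrete :: "'a set \<Rightarrow> ('a \<Rightarrow> 'a) \<Rightarrow> bool" where
  "invariant_set_discrete S f \<longleftrightarrow> (\<forall>x. x \<in> S \<longrightarrow> f x \<in> S)"

definition continuously_differentiable :: "('a::real_normed_vector \<Rightarrow> 'b::real_normed_vector) \<Rightarrow> bool" where
  "continuously_differentiable f \<longleftrightarrow>
     (\<exists>f' :: 'a \<Rightarrow> 'a \<Rightarrow>\<^sub>L 'b. (\<forall>x. (f has_derivative blinfun_apply (f' x)) (at x)) \<and> continuous_on UNIV f')"

end

theory Submission
  imports Defs
begin

theorem theorem12:
  fixes G :: "real^'n^'m" and b :: "real^'m" and f :: "real^'n \<Rightarrow> real^'n"
  assumes "continuously_differentiable f"
  shows "invariant_set_discrete {x. G *v x \<le> b} f \<longleftrightarrow>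
         (\<exists>H :: real^'m^'m. (\<forall>i j. H $ i $ j \<ge> 0) \<and>
            (\<forall>x \<in> {x. G *v x \<le> b}. (H ** G) *v x - G *v f x \<ge> H *v b - b))"
proof
  assume inv: "invariant_set_discrete {x. G *v x \<le> b} f"
  show "\<exists>H :: real^'m^'m. (\<forall>i j. H $ i $ j \<ge> 0) \<and>
            (\<forall>x \<in> {x. G *v x \<le> b}. (H ** G) *v x - G *v f x \<ge> H *v b - b)"
  proof (intro exI[of _ 0] conjI ballI allI)
    fix i j show "(0::real^'m^'m) $ i $ j \<ge> 0" by simp
  next
    fix x assume "x \<in> {x. G *v x \<le> b}"
    then have "G *v f x \<le> b" using inv unfolding invariant_set_discrete_def by auto
    then show "(0 ** G) *v x - G *v f x \<ge> (0::real^'m^'m) *v b - b"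
      by (simp add: less_eq_vec_def)
  qed
next
  assume "\<exists>H :: real^'m^'m. (\<forall>i j. H $ i $ j \<ge> 0) \<and>
            (\<forall>x \<in> {x. G *v x \<le> b}. (H ** G) *v x - G *v f x \<ge> H *v b - b)"
  then obtain H :: "real^'m^'m" where H0: "\<And>i j. H $ i $ j \<ge> 0"
    and Hx: "\<And>x. G *v x \<le> b \<Longrightarrow> (H ** G) *v x - G *v f x \<ge> H *v b - b" by auto
  show "invariant_set_discrete {x. G *v x \<le> b} f"
    unfolding invariant_set_discrete_def
  proof (intro allI impI)
    fix x assume "x \<in> {x. G *v x \<le> b}"
    then have xP: "G *v x \<le> b" by simp
    have key: "H *v b - b \<le> H *v (G *v x) - G *v f x"
      using Hx[OF xP] by (simp add: matrix_vector_mul_assoc)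
    have "(G *v f x) $ i \<le> b $ i" for i
    proof -
      have k: "(H *v b) $ i - b $ i \<le> (H *v (G *v x)) $ i - (G *v f x) $ i"
        using key by (simp add: less_eq_vec_def)
      have "(H *v (G *v x)) $ i - (H *v b) $ i = (\<Sum>j\<in>UNIV. H $ i $ j * ((G *v x) $ j - b $ j))"
        by (simp add: matrix_vector_mult_def sum_subtractf right_diff_distrib)
      also have "\<dots> \<le> 0"
        apply (rule sum_nonpos)
        using H0 xP by (simp add: less_eq_vec_def mult_nonneg_nonpos)
      finally show ?thesis using k by linarith
    qed
    then show "f x \<in> {x. G *v x \<le> b}" by (simp add: less_eq_vec_def)
  qed
qed

end
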